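(* For all $n\geq 1$, the spectral radius of $A_n$ is $2(1+\kappa_n)$, and hence the spectral radius of $M_n=(2(1+\kappa_n))^{-1}A_n$ is $1$.
   Context: For $\kappa\in(0,1/2)$, the paired tent map $T_\kappa:[-1,1]\to[-1,1]$ is $T_\kappa(x)=2(1+\kappa)(x+1)-1$ for $x\in[-1,-1/2]$, $T_\kappa(x)=-2(1+\kappa)x-1$ for $x\in[-1/2,0)$, $T_\kappa(0)=0$, $T_\kappa(x)=-2(1+\kappa)x+1$ for $x\in(0,1/2]$, $T_\kappa(x)=2(1+\kappa)(x-1)+1$ for $x\in[1/2,1]$. For $n\geq1$, $\kappa_n$ is the unique solution in $(0,1/2)$ of $(2+2\kappa)^n\kappa=1$, and $T_n=T_{\kappa_n}$. Let $r_0<\dots<r_{2n+4}$ enumerate increasingly the $2n+5$ distinct points of $\{-1,-1/2,0,1/2,1\}\cup\{T_n^i(\pm\kappa_n):0\le i\le n-1\}$ and $R_i=(r_{i-1},r_i)$. $A_n$ is the $(2n+4)\times(2n+4)$ matrix with $a_{ij}=1$ if $R_i\subset T_n(R_j)$ and $0$ otherwise. *)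

theory Defs
  imports Complex_Main "Jordan_Normal_Form.Spectral_Radius"
begin

text \<open>Paired tent map T_kappa on [-1,1] (values outside [-1,1] are irrelevant).\<close>
definition paired_tent :: "real \<Rightarrow> real \<Rightarrow> real" where
  "paired_tent k x =
     (if x \<le> -1/2 then 2*(1+k)*(x+1) - 1
      else if x < 0 then -2*(1+k)*x - 1
      else if x = 0 then 0
      else if x \<le> 1/2 then -2*(1+k)*x + 1
      else 2*(1+k)*(x-1) + 1)"

definition kappa :: "nat \<Rightarrow> real" where
  "kappa n = (THE k. 0 < k \<and> k < 1/2 \<and> (2 + 2*k)^n * k = 1)"

definition Tn :: "nat \<Rightarrow> real \<Rightarrow> real" where
  "Tn n = paired_tent (kappa n)"

definition part_points :: "nat \<Rightarrow> real set" where
  "part_points n = {-1, -1/2, 0, 1/2, 1}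
     \<union> {(Tn n ^^ i) (kappa n) | i. i \<le> n - 1}
     \<union> {(Tn n ^^ i) (- kappa n) | i. i \<le> n - 1}"

text \<open>r n i: the i-th partition point in increasing order (i = 0, ..., 2n+4).\<close>
definition r :: "nat \<Rightarrow> nat \<Rightarrow> real" where
  "r n i = sorted_list_of_set (part_points n) ! i"

definition R :: "nat \<Rightarrow> nat \<Rightarrow> real set" where
  "R n i = {r n (i - 1) <..< r n i}"

text \<open>The (2n+4)x(2n+4) transition matrix A_n; the JNF matrix index (i,j) (0-based)
  corresponds to the paper's a_{(i+1)(j+1)}.\<close>
definition A :: "nat \<Rightarrow> complex mat" where
  "A n = mat (2*n+4) (2*n+4)
     (\<lambda>(i,j). if R n (i+1) \<subseteq> Tn n ` R n (j+1) then 1 else 0)"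

definition M :: "nat \<Rightarrow> complex mat" where
  "M n = complex_of_real (inverse (2*(1 + kappa n))) \<cdot>\<^sub>m A n"

end

theory Submission
  imports Defs
begin

lemma spec_rad_left_eig:
  fixes B :: "complex mat" and b :: "nat \<Rightarrow> nat \<Rightarrow> real" and l :: "nat \<Rightarrow> real"
  assumes B: "B \<in> carrier_mat N N" and N: "N > 0"
    and Bb: "\<And>i j. i<N \<Longrightarrow> j<N \<Longrightarrow> B$$(i,j) = complex_of_real (b i j)"
    and bnn: "\<And>i j. i<N \<Longrightarrow> j<N \<Longrightarrow> b i j \<ge> 0"
    and lpos: "\<And>i. i<N \<Longrightarrow> l i > 0"
    and eig: "\<And>j. j<N \<Longrightarrow> (\<Sum>i=0..<N. l i * b i j) = \<rho> * l j"
  shows "spectral_radius B = \<rho>"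
proof -
  have rnn: "\<rho> \<ge> 0"
  proof -
    have "0 \<le> (\<Sum>i=0..<N. l i * b i 0)"
      using N lpos bnn by (intro sum_nonneg) (simp add: less_imp_le)
    hence "0 \<le> \<rho> * l 0" using eig[OF N] by simp
    thus ?thesis using lpos[OF N] by (simp add: zero_le_mult_iff)
  qed
  define v where "v = vec N (\<lambda>i. complex_of_real (l i))"
  have BT: "transpose_mat B \<in> carrier_mat N N" using B by simp
  have "eigenvector (transpose_mat B) v (complex_of_real \<rho>)"
    unfolding eigenvector_def
  proof (intro conjI)
    show "v \<in> carrier_vec (dim_row (transpose_mat B))" using B by (simp add: v_def)
    show "v \<noteq> 0\<^sub>v (dim_row (transpose_mat B))"
    proof
      assume "v = 0\<^sub>v (dim_row (transpose_mat B))"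
      hence "v $ 0 = 0" using B N by simp
      thus False using lpos[OF N] N by (simp add: v_def)
    qed
    show "transpose_mat B *\<^sub>v v = complex_of_real \<rho> \<cdot>\<^sub>v v"
    proof (rule eq_vecI)
      fix j assume j: "j < dim_vec (complex_of_real \<rho> \<cdot>\<^sub>v v)"
      hence jN: "j < N" by (simp add: v_def)
      have "(transpose_mat B *\<^sub>v v) $ j = (\<Sum>i=0..<N. B$$(i,j) * complex_of_real (l i))"
        using B jN by (simp add: scalar_prod_def v_def)
      also have "\<dots> = (\<Sum>i=0..<N. complex_of_real (l i * b i j))"
        using jN Bb by (intro sum.cong) (auto simp: mult.commute)
      also have "\<dots> = complex_of_real (\<rho> * l j)" by (subst of_real_sum[symmetric]) (simp only: eig[OF jN])
      finally show "(transpose_mat B *\<^sub>v v) $ j = (complex_of_real \<rho> \<cdot>\<^sub>v v) $ j"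
        using jN by (simp add: v_def)
    qed (use B in \<open>simp add: v_def\<close>)
  qed
  hence "eigenvalue (transpose_mat B) (complex_of_real \<rho>)" unfolding eigenvalue_def by blast
  hence "eigenvalue B (complex_of_real \<rho>)"
    using eigenvalue_root_char_poly[OF BT] eigenvalue_root_char_poly[OF B] B by simp
  hence "norm (complex_of_real \<rho>) \<le> spectral_radius B"
    by (intro spectral_radius_mem_max(2)[OF B N] imageI) (simp add: spectrum_def)
  hence ge: "\<rho> \<le> spectral_radius B" using rnn by simp
  obtain \<mu> where mu: "\<mu> \<in> spectrum B" "spectral_radius B = norm \<mu>"
    using spectral_radius_mem_max(1)[OF B N] by auto
  then obtain w where w: "eigenvector B w \<mu>" unfolding spectrum_def eigenvalue_def by auto
  have wc: "w \<in> carrier_vec N" and wnz: "w \<noteq> 0\<^sub>v N" and ew: "B *\<^sub>v w = \<mu> \<cdot>\<^sub>v w"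
    using w B unfolding eigenvector_def by auto
  have row: "norm \<mu> * norm (w$i) \<le> (\<Sum>j=0..<N. b i j * norm (w$j))" if i: "i < N" for i
  proof -
    have "\<mu> * w$i = (B *\<^sub>v w) $ i" using ew i wc by simp
    also have "\<dots> = (\<Sum>j=0..<N. B$$(i,j) * w$j)" using B i wc by (simp add: scalar_prod_def)
    also have "\<dots> = (\<Sum>j=0..<N. complex_of_real (b i j) * w$j)" using Bb i by (intro sum.cong) auto
    finally have "norm (\<mu> * w$i) = norm (\<Sum>j=0..<N. complex_of_real (b i j) * w$j)" by simp
    also have "\<dots> \<le> (\<Sum>j=0..<N. norm (complex_of_real (b i j) * w$j))" by (rule norm_sum)
    also have "\<dots> = (\<Sum>j=0..<N. b i j * norm (w$j))"
      using bnn i by (intro sum.cong) (auto simp: norm_mult)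
    finally show ?thesis by (simp add: norm_mult)
  qed
  define S where "S = (\<Sum>j=0..<N. l j * norm (w$j))"
  have Spos: "S > 0"
  proof -
    obtain j where j: "j < N" "w$j \<noteq> 0"
      using wnz wc by (metis eq_vecI index_zero_vec(1) index_zero_vec(2) carrier_vecD)
    have "0 < l j * norm (w$j)" using j lpos by simp
    also have "\<dots> \<le> S" unfolding S_def
      using j lpos by (intro member_le_sum) (auto simp: less_imp_le)
    finally show ?thesis .
  qed
  have "norm \<mu> * S = (\<Sum>i=0..<N. l i * (norm \<mu> * norm (w$i)))"
    unfolding S_def by (simp add: sum_distrib_left algebra_simps)
  also have "\<dots> \<le> (\<Sum>i=0..<N. l i * (\<Sum>j=0..<N. b i j * norm (w$j)))"
  proof (rule sum_mono)
    fix i assume i: "i \<in> {0..<N}"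
    show "l i * (norm \<mu> * norm (w$i)) \<le> l i * (\<Sum>j=0..<N. b i j * norm (w$j))"
      using i lpos[of i] row[of i] by (intro mult_left_mono) auto
  qed
  also have "\<dots> = (\<Sum>j=0..<N. (\<Sum>i=0..<N. l i * b i j) * norm (w$j))"
    unfolding sum_distrib_left sum_distrib_right mult.assoc by (rule sum.swap)
  also have "\<dots> = (\<Sum>j=0..<N. \<rho> * (l j * norm (w$j)))"
    using eig by (intro sum.cong) auto
  also have "\<dots> = \<rho> * S" unfolding S_def by (simp add: sum_distrib_left)
  finally have "norm \<mu> \<le> \<rho>" using Spos by simp
  with ge mu show ?thesis by simp
qed

lemma kappa_props:
  assumes n: "n \<ge> 1"
  shows "0 < kappa n \<and> kappa n < 1/2 \<and> (2 + 2*kappa n)^n * kappa n = 1"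
proof -
  define f where "f = (\<lambda>x::real. (2 + 2*x)^n * x)"
  have cont: "continuous_on {0..1/2} f" unfolding f_def by (intro continuous_intros)
  have f0: "f 0 = 0" unfolding f_def by simp
  have "(3::real)^n \<ge> 3^1" using n by (intro power_increasing) auto
  hence f12: "f (1/2) > 1" unfolding f_def by simp
  obtain x where x: "0 \<le> x" "x \<le> 1/2" "f x = 1"
    using IVT'[of f 0 1 "1/2"] f0 f12 cont by auto
  have x0: "x \<noteq> 0" using x f0 by auto
  have x12: "x \<noteq> 1/2"
  proof
    assume "x = 1/2" with x f12 show False by simp
  qed
  have mono: "f a < f b" if "0 < a" "a < b" for a b
  proof -
    have "(2+2*a)^n < (2+2*b)^n" using that n by (intro power_strict_mono) auto
    thus ?thesis unfolding f_def using that
      by (intro mult_strict_mono) auto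
  qed
  have ex: "0 < x \<and> x < 1/2 \<and> (2 + 2*x)^n * x = 1" using x x0 x12 f_def by auto
  have uniq: "z = x" if z: "0 < z \<and> z < 1/2 \<and> (2 + 2*z)^n * z = 1" for z
  proof (rule ccontr)
    assume "z \<noteq> x"
    hence "z < x \<or> x < z" by auto
    moreover have "\<not> z < x"
    proof
      assume "z < x" hence "f z < f x" using z by (intro mono) auto
      thus False using z x(3) unfolding f_def by simp
    qed
    moreover have "\<not> x < z"
    proof
      assume "x < z" hence "f x < f z" using ex by (intro mono) auto
      thus False using z x(3) unfolding f_def by simp
    qed
    ultimately show False by blast
  qed
  have "kappa n = x" unfolding kappa_def
    by (rule the_equality) (use ex uniq in blast)+
  with ex show ?thesis by simp
qed

lemma paired_tent_odd: "paired_tent k (-x) = - paired_tent k x"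
proof -
  consider "x = 1/2" | "x = -1/2" | "x \<noteq> 1/2" "x \<noteq> -1/2" by blast
  then show ?thesis unfolding paired_tent_def by cases (auto simp: algebra_simps)
qed

lemma iter_odd: "(paired_tent k ^^ i) (-x) = - (paired_tent k ^^ i) x"
  by (induction i) (auto simp: paired_tent_odd)

lemma aff_img_inc:
  fixes c d a b :: real assumes c: "c > 0"
  shows "(\<lambda>x. c*x+d) ` {a<..<b} = {c*a+d<..<c*b+d}"
proof
  show "(\<lambda>x. c*x+d) ` {a<..<b} \<subseteq> {c*a+d<..<c*b+d}" using c by auto
  show "{c*a+d<..<c*b+d} \<subseteq> (\<lambda>x. c*x+d) ` {a<..<b}"
  proof
    fix z assume z: "z \<in> {c*a+d<..<c*b+d}"
    have "(z-d)/c \<in> {a<..<b}" using z c by (auto simp: field_simps)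
    moreover have "z = c*((z-d)/c)+d" using c by simp
    ultimately show "z \<in> (\<lambda>x. c*x+d) ` {a<..<b}" by blast
  qed
qed

lemma aff_img_dec:
  fixes c d a b :: real assumes c: "c < 0"
  shows "(\<lambda>x. c*x+d) ` {a<..<b} = {c*b+d<..<c*a+d}"
proof
  show "(\<lambda>x. c*x+d) ` {a<..<b} \<subseteq> {c*b+d<..<c*a+d}" using c by auto
  show "{c*b+d<..<c*a+d} \<subseteq> (\<lambda>x. c*x+d) ` {a<..<b}"
  proof
    fix z assume z: "z \<in> {c*b+d<..<c*a+d}"
    have "(z-d)/c \<in> {a<..<b}" using z c by (auto simp: field_simps)
    moreover have "z = c*((z-d)/c)+d" using c by simp
    ultimately show "z \<in> (\<lambda>x. c*x+d) ` {a<..<b}" by blast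
  qed
qed

locale tentn =
  fixes n :: nat
  assumes n1: "n \<ge> 1"
begin

definition "k = kappa n"
definition "lam = 2 + 2*k"
definition "y t = 1 - 1/lam^t"
definition "T = Tn n"

lemma k_pos: "0 < k" and k_half: "k < 1/2" and k_eq: "lam^n * k = 1"
  using kappa_props[OF n1] unfolding k_def lam_def by auto

lemma lam_gt2: "lam > 2" and lam_lt3: "lam < 3" using k_pos k_half unfolding lam_def by auto

lemma k_eq': "k = 1/lam^n" using k_eq lam_gt2 by (simp add: field_simps)

lemma y0: "y 0 = 0" by (simp add: y_def)
lemma y_lt1: "y t < 1" using lam_gt2 by (simp add: y_def)
lemma y_mono: "s < t \<Longrightarrow> y s < y t"
proof -
  assume "s < t"
  hence "lam^s < lam^t" using lam_gt2 by (intro power_strict_increasing) auto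
  hence "1/lam^t < 1/lam^s" using lam_gt2 by (intro divide_strict_left_mono) auto
  thus "y s < y t" unfolding y_def by simp
qed
lemma y1: "y 1 > 1/2"
proof -
  have "1/lam < 1/2" by (rule divide_strict_left_mono) (use lam_gt2 in auto)
  thus ?thesis by (simp add: y_def)
qed
lemma y_half: "t \<ge> 1 \<Longrightarrow> y t > 1/2"
proof -
  assume t: "t \<ge> 1"
  show ?thesis
  proof (cases "t = 1")
    case True then show ?thesis using y1 by simp
  next
    case False
    hence "y 1 < y t" using t by (intro y_mono) simp
    then show ?thesis using y1 by linarith
  qed
qed
lemma y_lam: "t \<ge> 1 \<Longrightarrow> lam * (1 - y t) = 1 - y (t-1)"
proof -
  assume "t \<ge> 1"
  then obtain s where "t = Suc s" by (cases t) auto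
  thus ?thesis unfolding y_def using lam_gt2 by simp
qed
lemma lam_k: "lam * k = 1 - y (n-1)"
  using y_lam[OF n1] k_eq' by (simp add: y_def)

lemma T_eq: "T x = (if x \<le> -1/2 then lam*x + lam - 1 else if x < 0 then -lam*x - 1
     else if x = 0 then 0 else if x \<le> 1/2 then -lam*x + 1 else lam*x - lam + 1)"
  unfolding T_def Tn_def paired_tent_def k_def[symmetric] lam_def by (simp add: algebra_simps)

lemma orbit: "1 \<le> i \<Longrightarrow> i \<le> n \<Longrightarrow> (T ^^ i) k = y (n-i)"
proof (induction i)
  case 0 then show ?case by simp
next
  case (Suc i)
  show ?case
  proof (cases "i = 0")
    case True
    have "T k = 1 - lam * k" using k_pos k_half by (simp add: T_eq)
    then show ?thesis using True lam_k by simp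
  next
    case False
    hence IH: "(T ^^ i) k = y (n-i)" using Suc by auto
    have t1: "n - i \<ge> 1" using Suc by auto
    have "T (y (n-i)) = lam * y (n-i) - lam + 1"
      using y_half[OF t1] y_lt1[of "n-i"] by (simp add: T_eq)
    also have "\<dots> = 1 - lam * (1 - y (n-i))" by (simp add: algebra_simps)
    also have "\<dots> = y (n - Suc i)" using y_lam[OF t1] by simp
    finally show ?thesis using IH by simp
  qed
qed

definition "Q = {-1,-1/2,0,1/2,1,k,-k} \<union> y ` {1..n-1} \<union> (\<lambda>t. - y t) ` {1..n-1}"

lemma orbit_set: "{(T ^^ i) k | i. i \<le> n - 1} = insert k (y ` {1..n-1})"
proof (intro equalityI subsetI)
  fix z assume "z \<in> {(T ^^ i) k | i. i \<le> n - 1}"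
  then obtain i where i: "i \<le> n-1" "z = (T ^^ i) k" by auto
  show "z \<in> insert k (y ` {1..n-1})"
  proof (cases "i = 0")
    case True then show ?thesis using i by simp
  next
    case False
    hence "z = y (n-i)" using i orbit[of i] n1 by auto
    moreover have "n - i \<in> {1..n-1}" using False i n1 by auto
    ultimately show ?thesis by blast
  qed
next
  fix z assume "z \<in> insert k (y ` {1..n-1})"
  then consider "z = k" | t where "t \<in> {1..n-1}" "z = y t" by auto
  then show "z \<in> {(T ^^ i) k | i. i \<le> n - 1}"
  proof cases
    case 1 then show ?thesis by (intro CollectI exI[of _ 0]) auto
  next
    case (2 t)
    have "(T ^^ (n-t)) k = y (n - (n-t))" using 2 by (intro orbit) auto
    also have "n - (n-t) = t" using 2 by auto
    finally show ?thesis using 2 by (intro CollectI exI[of _ "n-t"]) auto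
  qed
qed

lemma part_points_Q: "part_points n = Q"
proof -
  have neg: "{(T ^^ i) (-k) | i. i \<le> n - 1} = uminus ` {(T ^^ i) k | i. i \<le> n - 1}"
    unfolding T_def Tn_def by (auto simp: iter_odd)
  show ?thesis
    unfolding part_points_def T_def[symmetric] k_def[symmetric] neg orbit_set Q_def
    by auto
qed


definition "rr i = (if i = 0 then -1 else if i < n then - y (n-i) else if i = n then -1/2
   else if i = n+1 then -k else if i = n+2 then 0 else if i = n+3 then k
   else if i = n+4 then 1/2 else if i < 2*n+4 then y (i-n-4) else real (i - (2*n+3)))"

lemma rr_0: "rr 0 = -1" by (simp add: rr_def)
lemma rr_neg: "0 < i \<Longrightarrow> i < n \<Longrightarrow> rr i = - y (n-i)" by (simp add: rr_def)
lemma rr_n: "rr n = -1/2" using n1 by (simp add: rr_def)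
lemma rr_n1: "rr (n+1) = -k" by (simp add: rr_def)
lemma rr_n2: "rr (n+2) = 0" by (simp add: rr_def)
lemma rr_n3: "rr (n+3) = k" by (simp add: rr_def)
lemma rr_n4: "rr (n+4) = 1/2" by (simp add: rr_def)
lemma rr_pos: "n+4 < i \<Longrightarrow> i < 2*n+4 \<Longrightarrow> rr i = y (i-n-4)" by (simp add: rr_def)
lemma rr_big: "2*n+4 \<le> i \<Longrightarrow> rr i = real (i - (2*n+3))" using n1 by (simp add: rr_def)
lemma rr_top: "rr (2*n+4) = 1" by (simp add: rr_big)

lemma rr_Suc: "rr i < rr (Suc i)"
proof -
  consider "i = 0" "n = 1" | "i = 0" "n \<ge> 2" | "0 < i" "Suc i < n" | "0 < i" "Suc i = n"
    | "i = n" | "i = n+1" | "i = n+2" | "i = n+3" | "i = n+4" "n = 1" | "i = n+4" "n \<ge> 2"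
    | "n+5 \<le> i" "Suc i < 2*n+4" | "n+5 \<le> i" "Suc i = 2*n+4" | "i \<ge> 2*n+4"
    using n1 by (atomize_elim, presburger)
  then show ?thesis
  proof cases
    case 1 then show ?thesis using rr_0 rr_n by simp
  next
    case 2 then show ?thesis using y_lt1[of "n-1"] rr_0 rr_neg[of 1] by simp
  next
    case 3 then show ?thesis using y_mono[of "n - Suc i" "n - i"] rr_neg[of i] rr_neg[of "Suc i"] by simp
  next
    case 4
    hence "n - i = 1" by simp
    then show ?thesis using 4 y1 rr_neg[of i] rr_n by simp
  next
    case 5
    hence e: "i = n" "Suc i = n+1" by simp_all
    show ?thesis unfolding e(2) unfolding e(1) rr_n rr_n1 using k_half by simp
  next
    case 6
    hence e: "i = n+1" "Suc i = n+2" by simp_all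
    show ?thesis unfolding e(2) unfolding e(1) rr_n1 rr_n2 using k_pos by simp
  next
    case 7
    hence e: "i = n+2" "Suc i = n+3" by simp_all
    show ?thesis unfolding e(2) unfolding e(1) rr_n2 rr_n3 using k_pos by simp
  next
    case 8
    hence e: "i = n+3" "Suc i = n+4" by simp_all
    show ?thesis unfolding e(2) unfolding e(1) rr_n3 rr_n4 using k_half by simp
  next
    case 9
    hence e: "i = n+4" "Suc i = 2*n+4" by simp_all
    show ?thesis unfolding e(2) unfolding e(1) rr_n4 rr_top by simp
  next
    case 10
    hence "Suc i - n - 4 = 1" by simp
    moreover have "i = n+4" using 10 by simp
    ultimately show ?thesis using 10 y1 rr_pos[of "Suc i"] rr_n4 by simp
  next
    case 11 then show ?thesis using y_mono[of "i - n - 4" "Suc i - n - 4"] rr_pos[of i] rr_pos[of "Suc i"] by simp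
  next
    case 12 then show ?thesis using y_lt1[of "i - n - 4"] rr_pos[of i] rr_big[of "Suc i"] by simp
  next
    case 13 then show ?thesis using rr_big[of i] rr_big[of "Suc i"] by simp
  qed
qed

lemma rr_mono: "strict_mono rr"
  using rr_Suc by (simp add: strict_mono_Suc_iff)

lemma rr_less_iff: "rr i < rr j \<longleftrightarrow> i < j"
  using rr_mono by (simp add: strict_mono_less)
lemma rr_le_iff: "rr i \<le> rr j \<longleftrightarrow> i \<le> j"
  using rr_mono by (simp add: strict_mono_less_eq)

lemma rr_img: "rr ` {0..<2*n+5} = Q"
proof (intro equalityI subsetI)
  fix z assume "z \<in> rr ` {0..<2*n+5}"
  then obtain i where i: "i < 2*n+5" "z = rr i" by auto
  consider "i = 0" | "0 < i" "i < n" | "i = n" | "i = n+1" | "i = n+2" | "i = n+3"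
    | "i = n+4" | "n+4 < i" "i < 2*n+4" | "i = 2*n+4" using i by (atomize_elim, presburger)
  then show "z \<in> Q"
  proof cases
    case 2
    hence "n - i \<in> {1..n-1}" by auto
    then show ?thesis using 2 i unfolding Q_def rr_def by auto
  next
    case 8
    hence "i - n - 4 \<in> {1..n-1}" by auto
    then show ?thesis using 8 i unfolding Q_def rr_def by auto
  qed (use i in \<open>auto simp: Q_def rr_def\<close>)
next
  fix z assume "z \<in> Q"
  then consider "z = -1" | "z = -1/2" | "z = 0" | "z = 1/2" | "z = 1" | "z = k" | "z = -k"
    | t where "t \<in> {1..n-1}" "z = y t" | t where "t \<in> {1..n-1}" "z = - y t"
    unfolding Q_def by blast
  then show "z \<in> rr ` {0..<2*n+5}"
  proof cases
    case 1 then show ?thesis using n1 by (intro image_eqI[of _ _ 0]) (auto simp: rr_def)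
  next
    case 2 then show ?thesis using n1 by (intro image_eqI[of _ _ n]) (auto simp: rr_def)
  next
    case 3 then show ?thesis using n1 by (intro image_eqI[of _ _ "n+2"]) (auto simp: rr_def)
  next
    case 4 then show ?thesis using n1 by (intro image_eqI[of _ _ "n+4"]) (auto simp: rr_def)
  next
    case 5 then show ?thesis using n1 by (intro image_eqI[of _ _ "2*n+4"]) (auto simp: rr_def)
  next
    case 6 then show ?thesis using n1 by (intro image_eqI[of _ _ "n+3"]) (auto simp: rr_def)
  next
    case 7 then show ?thesis using n1 by (intro image_eqI[of _ _ "n+1"]) (auto simp: rr_def)
  next
    case (8 t)
    hence e: "t + n + 4 - n - 4 = t" by simp
    show ?thesis using 8 by (intro image_eqI[of _ _ "t+n+4"]) (auto simp: rr_def e)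
  next
    case (9 t)
    hence e: "n - (n - t) = t" by (auto simp: diff_diff_cancel)
    show ?thesis using 9 by (intro image_eqI[of _ _ "n-t"]) (auto simp: rr_def e)
  qed
qed

lemma r_rr: "i < 2*n+5 \<Longrightarrow> r n i = rr i"
proof -
  assume i: "i < 2*n+5"
  define L where "L = map rr [0..<2*n+5]"
  have "sorted_wrt (<) L"
    unfolding L_def sorted_wrt_map by (rule sorted_wrt_mono_rel[OF _ sorted_wrt_upt]) (simp add: rr_less_iff)
  hence "sorted_list_of_set (set L) = L"
    by (intro sorted_list_of_set.idem_if_sorted_distinct) (auto simp: strict_sorted_iff)
  moreover have "set L = part_points n"
    unfolding L_def set_map set_upt using rr_img part_points_Q by simp
  moreover have "L ! i = rr i" unfolding L_def using i by (simp del: upt_Suc)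
  ultimately show ?thesis unfolding r_def by metis
qed


lemma y_Q: "t \<le> n - 1 \<Longrightarrow> y t \<in> Q"
  by (cases "t = 0") (auto simp: Q_def y0)
lemma my_Q: "t \<le> n - 1 \<Longrightarrow> - y t \<in> Q"
  by (cases "t = 0") (auto simp: Q_def y0)

lemma gen_img:
  assumes ab: "a < b" and Tg: "\<And>x. a < x \<Longrightarrow> x < b \<Longrightarrow> T x = c*x + d"
    and c: "c = lam \<or> c = -lam" and ga: "c*a+d \<in> Q" and gb: "c*b+d \<in> Q"
  shows "\<exists>lo hi. lo < hi \<and> hi < 2*n+5 \<and> T ` {a<..<b} = {rr lo<..<rr hi} \<and> rr hi - rr lo = lam*(b-a)"
proof -
  have img: "T ` {a<..<b} = (\<lambda>x. c*x+d) ` {a<..<b}"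
    using Tg by (intro image_cong) auto
  obtain p where p: "p < 2*n+5" "rr p = c*a+d" using ga rr_img[symmetric] by (auto simp: image_iff)
  obtain q where q: "q < 2*n+5" "rr q = c*b+d" using gb rr_img[symmetric] by (auto simp: image_iff)
  from c show ?thesis
  proof
    assume cl: "c = lam"
    hence "rr p < rr q" using p q ab lam_gt2 by simp
    hence "p < q" by (simp add: rr_less_iff)
    moreover have "T ` {a<..<b} = {rr p<..<rr q}" unfolding img p q
      using cl lam_gt2 by (intro aff_img_inc) simp
    moreover have "rr q - rr p = lam*(b-a)" using p q cl by (simp add: algebra_simps)
    ultimately show ?thesis using q by blast
  next
    assume cl: "c = -lam"
    hence "rr q < rr p" using p q ab lam_gt2 by simp
    hence "q < p" by (simp add: rr_less_iff)
    moreover have "T ` {a<..<b} = {rr q<..<rr p}" unfolding img p q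
      using cl lam_gt2 by (intro aff_img_dec) simp
    moreover have "rr p - rr q = lam*(b-a)" using p q cl by (simp add: algebra_simps)
    ultimately show ?thesis using p by blast
  qed
qed

lemma lam_half: "lam / 2 - 1 = k" by (simp add: lam_def field_simps)

lemma P1: "i \<le> n \<Longrightarrow> lam * rr i + (lam - 1) \<in> Q"
proof -
  assume i: "i \<le> n"
  consider "i = 0" | "0 < i" "i < n" | "i = n" using i by linarith
  then show ?thesis
  proof cases
    case 1 then show ?thesis by (simp add: rr_0 Q_def)
  next
    case 2
    have t: "n - i \<ge> 1" using 2 by simp
    have "lam * rr i + (lam - 1) = lam * (1 - y (n-i)) - 1" using 2 by (simp add: rr_neg algebra_simps)
    also have "\<dots> = - y (n-i-1)" using y_lam[OF t] by simp
    finally show ?thesis using my_Q[of "n-i-1"] by simp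
  next
    case 3
    have "lam * rr i + (lam - 1) = lam/2 - 1" using 3 by (simp add: rr_n)
    then show ?thesis using lam_half by (simp add: Q_def)
  qed
qed

lemma P2: "n \<le> i \<Longrightarrow> i \<le> n+2 \<Longrightarrow> (-lam) * rr i + (-1) \<in> Q"
proof -
  assume i: "n \<le> i" "i \<le> n+2"
  consider "i = n" | "i = n+1" | "i = n+2" using i by linarith
  then show ?thesis
  proof cases
    case 1
    have "(-lam) * rr i + (-1) = lam/2 - 1" using 1 by (simp add: rr_n)
    then show ?thesis using lam_half by (simp add: Q_def)
  next
    case 2
    have "(-lam) * rr i + (-1) = - y (n-1)" using 2 rr_n1 lam_k by simp
    then show ?thesis using my_Q[of "n-1"] by simp
  next
    case 3
    then show ?thesis using rr_n2 by (simp add: Q_def)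
  qed
qed

lemma P3: "n+2 \<le> i \<Longrightarrow> i \<le> n+4 \<Longrightarrow> (-lam) * rr i + 1 \<in> Q"
proof -
  assume i: "n+2 \<le> i" "i \<le> n+4"
  consider "i = n+2" | "i = n+3" | "i = n+4" using i by linarith
  then show ?thesis
  proof cases
    case 1
    then show ?thesis using rr_n2 by (simp add: Q_def)
  next
    case 2
    have "(-lam) * rr i + 1 = y (n-1)" using 2 rr_n3 lam_k by simp
    then show ?thesis using y_Q[of "n-1"] by simp
  next
    case 3
    have "(-lam) * rr i + 1 = -(lam/2 - 1)" using 3 rr_n4 by simp
    then show ?thesis using lam_half by (simp add: Q_def)
  qed
qed

lemma P4: "n+4 \<le> i \<Longrightarrow> i \<le> 2*n+4 \<Longrightarrow> lam * rr i + (1 - lam) \<in> Q"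
proof -
  assume i: "n+4 \<le> i" "i \<le> 2*n+4"
  consider "i = n+4" | "n+4 < i" "i < 2*n+4" | "i = 2*n+4" using i by linarith
  then show ?thesis
  proof cases
    case 1
    have "lam * rr i + (1 - lam) = -(lam/2 - 1)" unfolding 1 rr_n4 by simp
    then show ?thesis using lam_half by (simp add: Q_def)
  next
    case 2
    have t: "i - n - 4 \<ge> 1" using 2 by simp
    have "lam * rr i + (1 - lam) = 1 - lam * (1 - y (i-n-4))" using 2 by (simp add: rr_pos algebra_simps)
    also have "\<dots> = y (i-n-4-1)" using y_lam[OF t] by simp
    finally show ?thesis using y_Q[of "i-n-4-1"] 2 by simp
  next
    case 3
    then show ?thesis using rr_top by (simp add: Q_def)
  qed
qed

lemma interval_img:
  assumes j: "1 \<le> j" "j \<le> 2*n+4"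
  shows "\<exists>lo hi. lo < hi \<and> hi < 2*n+5 \<and> T ` {rr (j-1)<..<rr j} = {rr lo<..<rr hi}
     \<and> rr hi - rr lo = lam*(rr j - rr (j-1))"
proof -
  have ab: "rr (j-1) < rr j" using j by (simp add: rr_less_iff)
  consider "j \<le> n" | "n+1 \<le> j" "j \<le> n+2" | "n+3 \<le> j" "j \<le> n+4" | "n+5 \<le> j" using j by linarith
  then show ?thesis
  proof cases
    case 1
    show ?thesis
    proof (rule gen_img[OF ab, of lam "lam - 1"])
      fix x assume x: "rr (j-1) < x" "x < rr j"
      have "rr j \<le> rr n" using 1 by (simp add: rr_le_iff)
      hence "x \<le> -1/2" using x rr_n by simp
      thus "T x = lam*x + (lam - 1)" by (simp add: T_eq)
    qed (use 1 P1 in auto)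
  next
    case 2
    show ?thesis
    proof (rule gen_img[OF ab, of "-lam" "-1"])
      fix x assume x: "rr (j-1) < x" "x < rr j"
      have "rr n \<le> rr (j-1)" "rr j \<le> rr (n+2)" using 2 by (simp_all add: rr_le_iff)
      hence "-1/2 < x" "x < 0" using x rr_n rr_n2 by simp_all
      thus "T x = (-lam)*x + (-1)" by (simp add: T_eq)
    qed (use 2 P2 in auto)
  next
    case 3
    show ?thesis
    proof (rule gen_img[OF ab, of "-lam" "1"])
      fix x assume x: "rr (j-1) < x" "x < rr j"
      have "rr (n+2) \<le> rr (j-1)" "rr j \<le> rr (n+4)" using 3 by (simp_all add: rr_le_iff)
      hence "0 < x" "x < 1/2" using x rr_n2 rr_n4 by simp_all
      thus "T x = (-lam)*x + 1" by (simp add: T_eq)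
    qed (use 3 P3 in auto)
  next
    case 4
    show ?thesis
    proof (rule gen_img[OF ab, of "lam" "1 - lam"])
      fix x assume x: "rr (j-1) < x" "x < rr j"
      have "rr (n+4) \<le> rr (j-1)" using 4 by (simp_all add: rr_le_iff)
      hence "1/2 < x" using x rr_n4 by simp_all
      thus "T x = lam*x + (1 - lam)" by (simp add: T_eq)
    qed (use 4 j P4 in auto)
  qed
qed


definition "bA i j = (if R n (i+1) \<subseteq> Tn n ` R n (j+1) then 1 else (0::real))"

lemma R_rr: "i < 2*n+4 \<Longrightarrow> R n (i+1) = {rr i<..<rr (Suc i)}"
  unfolding R_def using r_rr[of i] r_rr[of "Suc i"] by simp

lemma A_col:
  assumes j: "j < 2*n+4"
  shows "(\<Sum>i=0..<2*n+4. (rr (Suc i) - rr i) * bA i j) = lam * (rr (Suc j) - rr j)"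
proof -
  obtain lo hi where lh: "lo < hi" "hi < 2*n+5" "T ` {rr j<..<rr (Suc j)} = {rr lo<..<rr hi}"
    "rr hi - rr lo = lam*(rr (Suc j) - rr j)"
    using interval_img[of "Suc j"] j by auto
  have img: "Tn n ` R n (j+1) = {rr lo<..<rr hi}" using lh(3) R_rr[OF j] unfolding T_def by simp
  have b: "bA i j = (if i \<in> {lo..<hi} then 1 else 0)" if i: "i < 2*n+4" for i
  proof -
    have "R n (i+1) \<subseteq> Tn n ` R n (j+1) \<longleftrightarrow> lo \<le> i \<and> Suc i \<le> hi"
      unfolding img R_rr[OF i] greaterThanLessThan_subseteq_greaterThanLessThan
      by (simp add: rr_less_iff rr_le_iff)
    thus ?thesis unfolding bA_def by auto
  qed
  have "(\<Sum>i=0..<2*n+4. (rr (Suc i) - rr i) * bA i j)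
      = (\<Sum>i=0..<2*n+4. if i \<in> {lo..<hi} then rr (Suc i) - rr i else 0)"
    by (intro sum.cong) (auto simp: b)
  also have "\<dots> = (\<Sum>i\<in>{0..<2*n+4} \<inter> {lo..<hi}. rr (Suc i) - rr i)"
    by (rule sum.inter_restrict[symmetric]) simp
  also have "{0..<2*n+4} \<inter> {lo..<hi} = {lo..<hi}" using lh by auto
  also have "(\<Sum>i\<in>{lo..<hi}. rr (Suc i) - rr i) = rr hi - rr lo"
    using lh by (intro sum_Suc_diff') simp
  finally show ?thesis using lh(4) by simp
qed

end

theorem corollary11:
  fixes n :: nat
  assumes "n \<ge> 1"
  shows "spectral_radius (A n) = 2 * (1 + kappa n) \<and> spectral_radius (M n) = 1"
proof -
  interpret tentn n using assms by unfold_locales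
  have lamk: "2 * (1 + kappa n) = lam" unfolding lam_def k_def by simp
  have Acar: "A n \<in> carrier_mat (2*n+4) (2*n+4)" by (simp add: A_def)
  have Aidx: "A n $$ (i,j) = complex_of_real (bA i j)" if "i < 2*n+4" "j < 2*n+4" for i j
    using that by (simp add: A_def bA_def)
  have bnn: "bA i j \<ge> 0" for i j by (simp add: bA_def)
  have lpos: "rr (Suc i) - rr i > 0" for i using rr_Suc[of i] by simp
  have sA: "spectral_radius (A n) = lam"
    by (rule spec_rad_left_eig[OF Acar _ Aidx bnn lpos A_col]) auto
  have Mcar: "M n \<in> carrier_mat (2*n+4) (2*n+4)" by (simp add: M_def A_def)
  have Midx: "M n $$ (i,j) = complex_of_real (inverse lam * bA i j)" if "i < 2*n+4" "j < 2*n+4" for i j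
    using that Aidx[OF that] Acar unfolding M_def lamk by simp
  have bnn': "inverse lam * bA i j \<ge> 0" for i j using lam_gt2 bnn[of i j] by simp
  have eigM: "(\<Sum>i=0..<2*n+4. (rr (Suc i) - rr i) * (inverse lam * bA i j)) = 1 * (rr (Suc j) - rr j)"
    if j: "j < 2*n+4" for j
  proof -
    have "(\<Sum>i=0..<2*n+4. (rr (Suc i) - rr i) * (inverse lam * bA i j))
        = inverse lam * (\<Sum>i=0..<2*n+4. (rr (Suc i) - rr i) * bA i j)"
      by (simp add: sum_distrib_left algebra_simps)
    also have "\<dots> = inverse lam * (lam * (rr (Suc j) - rr j))" using A_col[OF j] by simp
    also have "\<dots> = 1 * (rr (Suc j) - rr j)" using lam_gt2 by simp
    finally show ?thesis .
  qed
  have sM: "spectral_radius (M n) = 1"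
    by (rule spec_rad_left_eig[OF Mcar _ Midx bnn' lpos eigM]) auto
  show ?thesis using sA sM lamk by simp
qed

end
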